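(* Let $K$ be a positive integer and let $d,e$ be integers. Then, for each choice of sign (with $\pm$ and $\mp$ correlated throughout), \[ f_{1,2K+1,1}(q^{d},q^{e},q)\pm q^{\frac{K+d+e}{2}}f_{1,2K+1,1}(q^{1+K+d},q^{1+K+e},q) =f_{K+1,K+1,1}\big(\mp q^{(K+d+e)/2},q^{d},q\big) \mp q^{(K+2-d-e)/2}f_{K+1,K+1,1}\big(\mp q^{2+(3K-d-e)/2},q^{K+2-e},q\big). \]
   Context: Let $q=e^{2\pi i\tau}$ with $\operatorname{Im}\tau>0$, and for real $\alpha$ put $q^{\alpha}:=e^{2\pi i\alpha\tau}$. For positive integers $a,b,c$ and $x,y\in\mathbb{C}^*$, the Hecke-type double-sum is $f_{a,b,c}(x,y,q):=\Big(\sum_{r,s\ge0}-\sum_{r,s<0}\Big)(-1)^{r+s}x^ry^sq^{a\binom{r}{2}+brs+c\binom{s}{2}}$. *)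

theory Defs
  imports "HOL-Analysis.Analysis"
begin

text \<open>q = exp(2 pi i tau); q^alpha := exp(2 pi i alpha tau) for real alpha.\<close>
definition qpow :: "complex \<Rightarrow> real \<Rightarrow> complex" where
  "qpow \<tau> \<alpha> = exp (2 * of_real pi * \<i> * of_real \<alpha> * \<tau>)"

text \<open>Summand of the Hecke-type double sum; binomial a*(r choose 2) written as a*(r(r-1)/2).\<close>
definition hecke_term :: "int \<Rightarrow> int \<Rightarrow> int \<Rightarrow> complex \<Rightarrow> complex \<Rightarrow> complex \<Rightarrow> int \<times> int \<Rightarrow> complex" where
  "hecke_term a b c x y \<tau> rs = (case rs of (r, s) \<Rightarrow>
     (-1) powi (r + s) * x powi r * y powi s *
     qpow \<tau> (of_int (a * (r * (r - 1) div 2) + b * r * s + c * (s * (s - 1) div 2))))"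

definition hecke_f :: "int \<Rightarrow> int \<Rightarrow> int \<Rightarrow> complex \<Rightarrow> complex \<Rightarrow> complex \<Rightarrow> complex" where
  "hecke_f a b c x y \<tau> =
     (\<Sum>\<^sub>\<infinity>rs\<in>{(r, s). r \<ge> 0 \<and> s \<ge> 0}. hecke_term a b c x y \<tau> rs)
   - (\<Sum>\<^sub>\<infinity>rs\<in>{(r, s). r < 0 \<and> s < 0}. hecke_term a b c x y \<tau> rs)"

end

theory Submission
  imports Defs
begin


lemma qpow_mult: "qpow t a * qpow t b = qpow t (a + b)"
  unfolding qpow_def by (simp add: exp_add[symmetric] algebra_simps)

lemma qpow_powi: "qpow t a powi n = qpow t (a * of_int n)"
  unfolding qpow_def by (simp add: exp_power_int algebra_simps)

lemma half_int: "(of_int (r * (r - 1) div 2) :: real) = of_int r * (of_int r - 1) / 2"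
proof -
  have "even (r * (r - 1))" by simp
  then obtain k where k: "r * (r - 1) = 2 * k" by blast
  then have "r * (r - 1) div 2 = k" by simp
  moreover have "(of_int r * (of_int r - 1) :: real) = 2 * of_int k"
    using arg_cong[OF k, of "of_int :: int \<Rightarrow> real"] by simp
  ultimately show ?thesis by simp
qed

lemma hecke_term_eq:
  "hecke_term a b c (\<sigma> * qpow t \<alpha>) (qpow t \<beta>) t (r, s) =
   (-1) powi (r + s) * \<sigma> powi r * qpow t (\<alpha> * of_int r + \<beta> * of_int s +
     (of_int a * (of_int r * (of_int r - 1) / 2) + of_int b * of_int r * of_int s + of_int c * (of_int s * (of_int s - 1) / 2)))"
proof -
  have e: "(of_int (a * (r * (r - 1) div 2) + b * r * s + c * (s * (s - 1) div 2)) :: real)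
     = of_int a * (of_int r * (of_int r - 1) / 2) + of_int b * of_int r * of_int s + of_int c * (of_int s * (of_int s - 1) / 2)"
    by (simp add: half_int)
  have "hecke_term a b c (\<sigma> * qpow t \<alpha>) (qpow t \<beta>) t (r, s) =
     (-1) powi (r + s) * \<sigma> powi r * (qpow t (\<alpha> * of_int r) * qpow t (\<beta> * of_int s) *
     qpow t (of_int a * (of_int r * (of_int r - 1) / 2) + of_int b * of_int r * of_int s + of_int c * (of_int s * (of_int s - 1) / 2)))"
    unfolding hecke_term_def prod.case e[symmetric] by (simp only: power_int_mult_distrib qpow_powi mult.assoc)
  also have "\<dots> = (-1) powi (r + s) * \<sigma> powi r * qpow t (\<alpha> * of_int r + \<beta> * of_int s +
     (of_int a * (of_int r * (of_int r - 1) / 2) + of_int b * of_int r * of_int s + of_int c * (of_int s * (of_int s - 1) / 2)))"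
    by (simp only: qpow_mult)
  finally show ?thesis .
qed

lemma sq_powi_even: "(z::complex) * z = 1 \<Longrightarrow> z powi (2 * k) = 1"
  by (simp add: power_int_mult power2_eq_square)

lemma sq_powi_odd: "(z::complex) * z = 1 \<Longrightarrow> z powi (2 * k + 1) = z"
  by (subst power_int_add) (auto simp add: power_int_mult power2_eq_square)

lemma hecke_term_eq1:
  "hecke_term a b c (qpow t \<alpha>) (qpow t \<beta>) t (r, s) =
   (-1) powi (r + s) * qpow t (\<alpha> * of_int r + \<beta> * of_int s +
     (of_int a * (of_int r * (of_int r - 1) / 2) + of_int b * of_int r * of_int s + of_int c * (of_int s * (of_int s - 1) / 2)))"
  using hecke_term_eq[of a b c 1 t \<alpha> \<beta> r s] by simp

lemma powi_shift: "(z::complex) * z = 1 \<Longrightarrow> z powi (m + 2 * k) = z powi m"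
proof -
  assume h: "z * z = 1"
  then have "z \<noteq> 0" by auto
  then show ?thesis by (simp add: power_int_add sq_powi_even[OF h])
qed

lemma powi_shift1: "(z::complex) * z = 1 \<Longrightarrow> z powi (m + 2 * k + 1) = z powi m * z"
proof -
  assume h: "z * z = 1"
  then have "z \<noteq> 0" by auto
  then show ?thesis by (simp add: power_int_add sq_powi_even[OF h])
qed

lemma m1sq: "(-1::complex) * (-1) = 1" by simp

lemma I1:
  fixes K d e r s :: int and \<epsilon> \<tau> :: complex
  assumes eps: "\<epsilon> * \<epsilon> = 1"
  shows "hecke_term (K+1) (K+1) 1 (- \<epsilon> * qpow \<tau> (of_int (K + d + e) / 2)) (qpow \<tau> (of_int d)) \<tau> (2 * s, r - s)
     = hecke_term 1 (2*K+1) 1 (qpow \<tau> (of_int d)) (qpow \<tau> (of_int e)) \<tau> (r, s)"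
proof -
  have e1: "(-1::complex) powi (2 * s + (r - s)) = (-1) powi (r + s)"
    using powi_shift[OF m1sq, of "r + s" "0"] by (simp add: algebra_simps)
  have e2: "(- \<epsilon>) powi (2 * s) = 1" using eps by (intro sq_powi_even) simp
  show ?thesis unfolding hecke_term_eq hecke_term_eq1 e1 e2
    apply (simp add: field_simps)
    apply (rule arg_cong[where f="qpow \<tau>"])
    apply (simp add: divide_simps)
    done
qed

lemma fin: "a = b \<Longrightarrow> x = y \<Longrightarrow> a * qpow t x = b * qpow t y" by simp
lemma fin_neg: "a = b \<Longrightarrow> x = y \<Longrightarrow> - (a * qpow t x) = - (b * qpow t y)" by simp
lemma comb: "a * qpow t x * (b * qpow t y) = (a * b) * qpow t (x + y)"
  by (simp add: qpow_mult[symmetric] ac_simps)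

lemma I2:
  fixes K d e r s :: int and \<epsilon> \<tau> :: complex
  assumes eps: "\<epsilon> * \<epsilon> = 1"
  shows "hecke_term (K + 1) (K + 1) 1 (- \<epsilon> * qpow \<tau> (of_int (K + d + e) / 2)) (qpow \<tau> (of_int d)) \<tau> (2 * s + 1, r - s) = (\<epsilon> * qpow \<tau> (of_int (K + d + e) / 2) * hecke_term 1 (2 * K + 1) 1 (qpow \<tau> (of_int (1 + K + d))) (qpow \<tau> (of_int (1 + K + e))) \<tau> (r, s))"
proof -
  have e1: "(-1::complex) powi (2 * s + 1 + (r - s)) = (-1) powi (r + s) * (-1)"
    using powi_shift1[OF m1sq, of "r + s" "0"] by (simp add: algebra_simps)
  have e2: "(- \<epsilon>) powi (2 * s + 1) = - \<epsilon>" using eps by (intro sq_powi_odd) simp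
  show ?thesis unfolding hecke_term_eq hecke_term_eq1 e1 e2 comb
    apply (rule fin fin_neg)
     apply (simp add: algebra_simps eps)
    apply (simp add: divide_simps algebra_simps)
    done
qed

lemma I3:
  fixes K d e r s :: int and \<epsilon> \<tau> :: complex
  assumes eps: "\<epsilon> * \<epsilon> = 1"
  shows "- \<epsilon> * qpow \<tau> (of_int (K + 2 - d - e) / 2) * hecke_term (K + 1) (K + 1) 1 (- \<epsilon> * qpow \<tau> (2 + of_int (3 * K - d - e) / 2)) (qpow \<tau> (of_int (K + 2 - e))) \<tau> (- 2 * r - 1, r - s) = - hecke_term 1 (2 * K + 1) 1 (qpow \<tau> (of_int d)) (qpow \<tau> (of_int e)) \<tau> (r, s)"
proof -
  have e1: "(-1::complex) powi (- 2 * r - 1 + (r - s)) = (-1) powi (r + s) * (-1)"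
  proof -
    have h: "- 2 * r - 1 + (r - s) = (r + s) + 2 * (- r - s - 1) + 1" by simp
    show ?thesis unfolding h by (rule powi_shift1[OF m1sq])
  qed
  have e2: "(- \<epsilon>) powi (- 2 * r - 1) = - \<epsilon>"
  proof -
    have h: "- 2 * r - 1 = 2 * (- r - 1) + 1" by simp
    show ?thesis unfolding h using eps by (intro sq_powi_odd) simp
  qed
  show ?thesis unfolding hecke_term_eq hecke_term_eq1 e1 e2 comb
    unfolding minus_mult_left[symmetric]
    apply (rule fin fin_neg)
     apply (simp add: algebra_simps eps)
    apply (simp add: divide_simps algebra_simps)
    done
qed

lemma I4:
  fixes K d e r s :: int and \<epsilon> \<tau> :: complex
  assumes eps: "\<epsilon> * \<epsilon> = 1"
  shows "- \<epsilon> * qpow \<tau> (of_int (K + 2 - d - e) / 2) * hecke_term (K + 1) (K + 1) 1 (- \<epsilon> * qpow \<tau> (2 + of_int (3 * K - d - e) / 2)) (qpow \<tau> (of_int (K + 2 - e))) \<tau> (- 2 * r - 2, r - s) = - (\<epsilon> * qpow \<tau> (of_int (K + d + e) / 2) * hecke_term 1 (2 * K + 1) 1 (qpow \<tau> (of_int (1 + K + d))) (qpow \<tau> (of_int (1 + K + e))) \<tau> (r, s))"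
proof -
  have e1: "(-1::complex) powi (- 2 * r - 2 + (r - s)) = (-1) powi (r + s)"
  proof -
    have h: "- 2 * r - 2 + (r - s) = (r + s) + 2 * (- r - s - 1)" by simp
    show ?thesis unfolding h by (rule powi_shift[OF m1sq])
  qed
  have e2: "(- \<epsilon>) powi (- 2 * r - 2) = 1"
  proof -
    have "- 2 * r - 2 = 2 * (- r - 1)" by simp
    then show ?thesis using eps sq_powi_even[of "- \<epsilon>" "- r - 1"] by simp
  qed
  show ?thesis unfolding hecke_term_eq hecke_term_eq1 e1 e2 comb
    unfolding minus_mult_left[symmetric]
    apply (rule fin fin_neg)
     apply (simp add: algebra_simps eps)
    apply (simp add: divide_simps algebra_simps)
    done
qed



lemma geo2:
  fixes \<rho> :: real assumes "0 \<le> \<rho>" "\<rho> < 1"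
  shows "(\<lambda>(i::nat, j::nat). \<rho> ^ i * \<rho> ^ j) summable_on UNIV"
proof -
  have "Infinite_Set_Sum.abs_summable_on (\<lambda>n::nat. \<rho> ^ n) UNIV"
    using assms by (simp add: abs_summable_on_nat_iff' summable_geometric)
  then have "Infinite_Set_Sum.abs_summable_on (\<lambda>(i::nat,j::nat). \<rho> ^ i * \<rho> ^ j) (UNIV \<times> UNIV)"
    by (intro abs_summable_on_product) auto
  then have "Infinite_Sum.abs_summable_on (\<lambda>(i::nat,j::nat). \<rho> ^ i * \<rho> ^ j) UNIV"
    using abs_summable_equivalent by (metis UNIV_Times_UNIV)
  moreover have "(\<lambda>(i::nat,j::nat). \<rho> ^ i * \<rho> ^ j) = (\<lambda>x. \<rho> ^ fst x * \<rho> ^ snd x)" by auto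
  ultimately show ?thesis
    using assms by (simp add: case_prod_beta abs_mult)
qed

lemma quad:
  fixes x \<alpha> :: real
  shows "x * (x - 1) / 2 + \<alpha> * x \<ge> \<bar>x\<bar> - (\<bar>\<alpha>\<bar> + 3/2)^2 / 2"
proof -
  have h1: "0 \<le> \<alpha> * x + \<bar>\<alpha>\<bar> * \<bar>x\<bar>"
    by (metis abs_ge_minus_self abs_mult minus_le_iff add.commute le_add_same_cancel1 diff_ge_0_iff_ge diff_minus_eq_add)
  have h2: "0 \<le> (\<bar>x\<bar> - x) / 2" by simp
  have h4: "0 \<le> (\<bar>x\<bar> - (\<bar>\<alpha>\<bar> + 3/2))^2 / 2" by simp
  have id: "x * (x - 1) / 2 + \<alpha> * x - (\<bar>x\<bar> - (\<bar>\<alpha>\<bar> + 3/2)^2 / 2)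
     = (\<bar>x\<bar> - (\<bar>\<alpha>\<bar> + 3/2))^2 / 2 + (\<alpha> * x + \<bar>\<alpha>\<bar> * \<bar>x\<bar>) + (\<bar>x\<bar> - x) / 2"
    by (simp add: power2_eq_square algebra_simps abs_mult_self_eq divide_simps)
  show ?thesis using h1 h2 h4 id by linarith
qed

lemma norm_qpow: "norm (qpow t a) = exp (- (2 * pi * Im t) * a)"
  unfolding qpow_def by (simp add: algebra_simps)



lemma norm_term:
  assumes "norm x = norm (qpow t \<alpha>)" "norm y = norm (qpow t \<beta>)"
  shows "norm (hecke_term a b c x y t (r, s)) = norm (hecke_term a b c (qpow t \<alpha>) (qpow t \<beta>) t (r, s))"
  unfolding hecke_term_def using assms by (simp add: norm_mult norm_power_int)

lemma norm_term2:
  "norm (hecke_term a b c (qpow t \<alpha>) (qpow t \<beta>) t (r, s)) =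
   exp (- (2 * pi * Im t) * (\<alpha> * of_int r + \<beta> * of_int s +
     (of_int a * (of_int r * (of_int r - 1) / 2) + of_int b * of_int r * of_int s + of_int c * (of_int s * (of_int s - 1) / 2))))"
  unfolding hecke_term_eq1 by (simp add: norm_mult norm_power_int norm_qpow)

lemma int_rr: "(0::real) \<le> of_int r * (of_int r - 1)"
proof -
  have "0 \<le> r * (r - 1)"
    by (cases "r \<ge> 1") (auto simp: mult_nonpos_nonpos)
  then have "(0::real) \<le> of_int (r * (r - 1))" by linarith
  then show ?thesis by simp
qed

lemma lin_aux: "(X::real) \<le> X' \<Longrightarrow> Y \<le> Y' \<Longrightarrow> 0 \<le> Bv \<Longrightarrow> R - A / 2 \<le> X + p \<Longrightarrow> S - B / 2 \<le> Y + q
   \<Longrightarrow> R + S - (A + B) / 2 \<le> p + q + (X' + Bv + Y')" by argo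

lemma F_bound:
  fixes a b c r s :: int and \<alpha> \<beta> :: real
  assumes "a \<ge> 1" "b \<ge> 0" "c \<ge> 1" "r * s \<ge> 0"
  shows "\<alpha> * of_int r + \<beta> * of_int s +
     (of_int a * (of_int r * (of_int r - 1) / 2) + of_int b * of_int r * of_int s + of_int c * (of_int s * (of_int s - 1) / 2))
     \<ge> \<bar>of_int r\<bar> + \<bar>of_int s\<bar> - ((\<bar>\<alpha>\<bar> + 3/2)^2 + (\<bar>\<beta>\<bar> + 3/2)^2) / 2"
proof -
  have r1: "of_int a * (of_int r * (of_int r - 1) / 2) \<ge> (of_int r * (of_int r - 1) / 2 :: real)"
    using int_rr[of r] assms(1) by (intro mult_right_mono[where c = "of_int r * (of_int r - 1) / 2", of 1, simplified]) auto
  have s1: "of_int c * (of_int s * (of_int s - 1) / 2) \<ge> (of_int s * (of_int s - 1) / 2 :: real)"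
    using int_rr[of s] assms(3) by (intro mult_right_mono[where c = "of_int s * (of_int s - 1) / 2", of 1, simplified]) auto
  have "0 \<le> b * (r * s)" using assms by simp
  then have "(0::real) \<le> of_int (b * (r * s))" by (simp only: of_int_0_le_iff)
  then have b1: "(0::real) \<le> of_int b * of_int r * of_int s" by (simp add: mult.assoc)
  show ?thesis by (rule lin_aux[OF r1 s1 b1 quad[of "of_int r" \<alpha>] quad[of "of_int s" \<beta>]])
qed

lemma term_bound:
  fixes a b c r s :: int and \<alpha> \<beta> :: real and i j :: nat
  assumes "a \<ge> 1" "b \<ge> 0" "c \<ge> 1" "r * s \<ge> 0" "Im t > 0"
    "norm x = norm (qpow t \<alpha>)" "norm y = norm (qpow t \<beta>)"
    "real i \<le> \<bar>of_int r\<bar>" "real j \<le> \<bar>of_int s\<bar>"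
  shows "norm (hecke_term a b c x y t (r, s)) \<le>
     exp (2 * pi * Im t * (((\<bar>\<alpha>\<bar> + 3/2)^2 + (\<bar>\<beta>\<bar> + 3/2)^2) / 2)) * exp (- (2 * pi * Im t)) ^ i * exp (- (2 * pi * Im t)) ^ j"
proof -
  define L where "L = 2 * pi * Im t"
  define C where "C = ((\<bar>\<alpha>\<bar> + 3/2)^2 + (\<bar>\<beta>\<bar> + 3/2)^2) / 2"
  have L: "L > 0" using assms unfolding L_def by simp
  define F where "F = \<alpha> * of_int r + \<beta> * of_int s +
     (of_int a * (of_int r * (of_int r - 1) / 2) + of_int b * of_int r * of_int s + of_int c * (of_int s * (of_int s - 1) / 2))"
  have FB: "F \<ge> \<bar>of_int r\<bar> + \<bar>of_int s\<bar> - C"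
    unfolding F_def C_def using F_bound[OF assms(1-4)] by simp
  have "norm (hecke_term a b c x y t (r, s)) = exp (- L * F)"
    unfolding norm_term[OF assms(6,7)] norm_term2 F_def L_def ..
  also have "\<dots> \<le> exp (- L * (real i + real j - C))"
    using FB assms(8,9) L by (intro exp_le_cancel_iff[THEN iffD2]) (simp add: mult_left_mono)
  also have "\<dots> = exp (L * C) * exp (of_nat i * (- L)) * exp (of_nat j * (- L))"
    by (simp add: exp_add[symmetric] algebra_simps)
  also have "\<dots> = exp (L * C) * exp (- L) ^ i * exp (- L) ^ j"
    by (simp only: exp_of_nat_mult)
  finally show ?thesis unfolding L_def C_def .
qed



lemma summ_gen:
  fixes a b c :: int and \<alpha> \<beta> :: real and h :: "nat \<times> nat \<Rightarrow> int \<times> int"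
  assumes "a \<ge> 1" "b \<ge> 0" "c \<ge> 1" "Im t > 0"
    "norm x = norm (qpow t \<alpha>)" "norm y = norm (qpow t \<beta>)"
    and bij: "bij_betw h UNIV A"
    and hp: "\<And>p. fst (h p) * snd (h p) \<ge> 0 \<and> real (fst p) \<le> \<bar>of_int (fst (h p))\<bar> \<and> real (snd p) \<le> \<bar>of_int (snd (h p))\<bar>"
  shows "hecke_term a b c x y t summable_on A"
proof -
  define \<rho> where "\<rho> = exp (- (2 * pi * Im t))"
  define M where "M = exp (2 * pi * Im t * (((\<bar>\<alpha>\<bar> + 3/2)^2 + (\<bar>\<beta>\<bar> + 3/2)^2) / 2))"
  have \<rho>: "0 \<le> \<rho>" "\<rho> < 1" unfolding \<rho>_def using assms(4) by auto
  have g: "(\<lambda>p. M * (case p of (i, j) \<Rightarrow> \<rho> ^ i * \<rho> ^ j)) summable_on UNIV"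
    using geo2[OF \<rho>] by (rule summable_on_cmult_right)
  have "(\<lambda>p. norm (hecke_term a b c x y t (h p))) summable_on UNIV"
  proof (rule summable_on_comparison_test[OF g])
    fix p :: "nat \<times> nat"
    obtain i j where p: "p = (i, j)" by (cases p)
    obtain r s where hpe: "h p = (r, s)" by (cases "h p")
    have "norm (hecke_term a b c x y t (r, s)) \<le> M * \<rho> ^ i * \<rho> ^ j"
      unfolding M_def \<rho>_def
      using hp[of p] p hpe by (intro term_bound[OF assms(1-3) _ assms(4-6)]) auto
    then show "norm (hecke_term a b c x y t (h p)) \<le> M * (case p of (i, j) \<Rightarrow> \<rho> ^ i * \<rho> ^ j)"
      using p hpe by (simp add: mult.assoc)
  qed simp
  then have "(\<lambda>p. hecke_term a b c x y t (h p)) summable_on UNIV"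
    by (rule abs_summable_summable)
  then show ?thesis using summable_on_reindex_bij_betw[OF bij] by blast
qed

lemma bij_pos: "bij_betw (\<lambda>(i::nat, j::nat). (int i, int j)) UNIV {(r, s). r \<ge> 0 \<and> s \<ge> 0}"
  by (rule bij_betwI[where g = "\<lambda>(r, s). (nat r, nat s)"]) auto

lemma bij_neg: "bij_betw (\<lambda>(i::nat, j::nat). (- int i - 1, - int j - 1)) UNIV {(r, s). r < 0 \<and> s < 0}"
  by (rule bij_betwI[where g = "\<lambda>(r, s). (nat (- r - 1), nat (- s - 1))"]) auto

lemma summ_pos:
  fixes a b c :: int and \<alpha> \<beta> :: real
  assumes "a \<ge> 1" "b \<ge> 0" "c \<ge> 1" "Im t > 0"
    "norm x = norm (qpow t \<alpha>)" "norm y = norm (qpow t \<beta>)"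
  shows "hecke_term a b c x y t summable_on {(r, s). r \<ge> 0 \<and> s \<ge> 0}"
  by (rule summ_gen[OF assms bij_pos]) auto

lemma summ_neg:
  fixes a b c :: int and \<alpha> \<beta> :: real
  assumes "a \<ge> 1" "b \<ge> 0" "c \<ge> 1" "Im t > 0"
    "norm x = norm (qpow t \<alpha>)" "norm y = norm (qpow t \<beta>)"
  shows "hecke_term a b c x y t summable_on {(r, s). r < 0 \<and> s < 0}"
  by (rule summ_gen[OF assms bij_neg]) (auto simp: mult_nonpos_nonpos)



theorem proposition5p1:
  fixes K d e :: int and \<tau> \<epsilon> :: complex
  assumes "K > 0" and "Im \<tau> > 0" and "\<epsilon> = 1 \<or> \<epsilon> = -1"
  shows "hecke_f 1 (2 * K + 1) 1 (qpow \<tau> (of_int d)) (qpow \<tau> (of_int e)) \<tau>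
         + \<epsilon> * qpow \<tau> (of_int (K + d + e) / 2)
             * hecke_f 1 (2 * K + 1) 1 (qpow \<tau> (of_int (1 + K + d))) (qpow \<tau> (of_int (1 + K + e))) \<tau>
       = hecke_f (K + 1) (K + 1) 1 (- \<epsilon> * qpow \<tau> (of_int (K + d + e) / 2)) (qpow \<tau> (of_int d)) \<tau>
         - \<epsilon> * qpow \<tau> (of_int (K + 2 - d - e) / 2)
             * hecke_f (K + 1) (K + 1) 1 (- \<epsilon> * qpow \<tau> (2 + of_int (3 * K - d - e) / 2))
                 (qpow \<tau> (of_int (K + 2 - e))) \<tau>"
proof -
  have eps: "\<epsilon> * \<epsilon> = 1" using assms(3) by auto
  have neps: "norm (- \<epsilon> * z) = norm z" for z using assms(3) by (auto simp: norm_mult)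
  define T0 where "T0 = hecke_term 1 (2 * K + 1) 1 (qpow \<tau> (of_int d)) (qpow \<tau> (of_int e)) \<tau>"
  define T1' where "T1' = hecke_term 1 (2 * K + 1) 1 (qpow \<tau> (of_int (1 + K + d))) (qpow \<tau> (of_int (1 + K + e))) \<tau>"
  define c1 where "c1 = \<epsilon> * qpow \<tau> (of_int (K + d + e) / 2)"
  define T1 where "T1 = (\<lambda>p. c1 * T1' p)"
  define U where "U = hecke_term (K + 1) (K + 1) 1 (- \<epsilon> * qpow \<tau> (of_int (K + d + e) / 2)) (qpow \<tau> (of_int d)) \<tau>"
  define V' where "V' = hecke_term (K + 1) (K + 1) 1 (- \<epsilon> * qpow \<tau> (2 + of_int (3 * K - d - e) / 2)) (qpow \<tau> (of_int (K + 2 - e))) \<tau>"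
  define c2 where "c2 = - \<epsilon> * qpow \<tau> (of_int (K + 2 - d - e) / 2)"
  define V where "V = (\<lambda>p. c2 * V' p)"
  define Ap where "Ap = {(r::int, s::int). r \<ge> 0 \<and> s \<ge> 0}"
  define Am where "Am = {(r::int, s::int). r < 0 \<and> s < 0}"
  define Ep where "Ep = {(r::int, s::int). 0 \<le> s \<and> s \<le> r}"
  define Em where "Em = {(r::int, s::int). s < 0 \<and> r < s}"
  define P where "P = {(r::int, s::int). 0 \<le> r \<and> r < s}"
  define N where "N = {(r::int, s::int). s \<le> r \<and> r < 0}"
  define Bpe where "Bpe = {(m::int, n::int). m \<ge> 0 \<and> n \<ge> 0 \<and> even m}"
  define Bpo where "Bpo = {(m::int, n::int). m \<ge> 0 \<and> n \<ge> 0 \<and> odd m}"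
  define Bme where "Bme = {(m::int, n::int). m < 0 \<and> n < 0 \<and> even m}"
  define Bmo where "Bmo = {(m::int, n::int). m < 0 \<and> n < 0 \<and> odd m}"
  have Ap_split: "Ap = Ep \<union> P" "Ep \<inter> P = {}" unfolding Ap_def Ep_def P_def by auto
  have Am_split: "Am = Em \<union> N" "Em \<inter> N = {}" unfolding Am_def Em_def N_def by auto
  have Bp_split: "Ap = Bpe \<union> Bpo" "Bpe \<inter> Bpo = {}" unfolding Ap_def Bpe_def Bpo_def by auto
  have Bm_split: "Am = Bme \<union> Bmo" "Bme \<inter> Bmo = {}" unfolding Am_def Bme_def Bmo_def by auto

  have K0: "K \<ge> 0" using assms(1) by simp
  have S0p: "T0 summable_on Ap" unfolding T0_def Ap_def
    by (rule summ_pos[OF _ _ _ assms(2)]) (use K0 in auto)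
  have S0m: "T0 summable_on Am" unfolding T0_def Am_def
    by (rule summ_neg[OF _ _ _ assms(2)]) (use K0 in auto)
  have S1p': "T1' summable_on Ap" unfolding T1'_def Ap_def
    by (rule summ_pos[OF _ _ _ assms(2)]) (use K0 in auto)
  have S1m': "T1' summable_on Am" unfolding T1'_def Am_def
    by (rule summ_neg[OF _ _ _ assms(2)]) (use K0 in auto)
  have S1p: "T1 summable_on Ap" unfolding T1_def using S1p' by (rule summable_on_cmult_right)
  have S1m: "T1 summable_on Am" unfolding T1_def using S1m' by (rule summable_on_cmult_right)
  have sub: "Ep \<subseteq> Ap" "P \<subseteq> Ap" "Em \<subseteq> Am" "N \<subseteq> Am" using Ap_split Am_split by auto
  have S0: "T0 summable_on Ep" "T0 summable_on P" "T0 summable_on Em" "T0 summable_on N"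
    using summable_on_subset[OF S0p sub(1)] summable_on_subset[OF S0p sub(2)]
      summable_on_subset[OF S0m sub(3)] summable_on_subset[OF S0m sub(4)] by auto
  have S1: "T1 summable_on Ep" "T1 summable_on P" "T1 summable_on Em" "T1 summable_on N"
    using summable_on_subset[OF S1p sub(1)] summable_on_subset[OF S1p sub(2)]
      summable_on_subset[OF S1m sub(3)] summable_on_subset[OF S1m sub(4)] by auto

  have iU0: "U (2 * s, r - s) = T0 (r, s)" for r s unfolding U_def T0_def by (rule I1[OF eps])
  have iU1: "U (2 * s + 1, r - s) = T1 (r, s)" for r s unfolding U_def T1_def T1'_def c1_def by (rule I2[OF eps])
  have iV0: "V (- 2 * r - 1, r - s) = - T0 (r, s)" for r s unfolding V_def V'_def c2_def T0_def by (rule I3[OF eps])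
  have iV1: "V (- 2 * r - 2, r - s) = - T1 (r, s)" for r s unfolding V_def V'_def c2_def T1_def T1'_def c1_def by (rule I4[OF eps])

  have iV0': "V (- (2 * r) - 1, r - s) = - T0 (r, s)" for r s using iV0[of r s] by simp
  have iV1': "V (- (2 * r) - 2, r - s) = - T1 (r, s)" for r s using iV1[of r s] by simp
  define jU0 where "jU0 = (\<lambda>(r::int, s::int). (2 * s, r - s))"
  define jU1 where "jU1 = (\<lambda>(r::int, s::int). (2 * s + 1, r - s))"
  define iU where "iU = (\<lambda>(m::int, n::int). (n + m div 2, m div 2))"
  define jV0 where "jV0 = (\<lambda>(r::int, s::int). (- 2 * r - 1, r - s))"
  define jV1 where "jV1 = (\<lambda>(r::int, s::int). (- 2 * r - 2, r - s))"
  define iV where "iV = (\<lambda>(m::int, n::int). (- (m div 2) - 1, - (m div 2) - 1 - n))"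

  have "infsum T0 Ep = infsum U Bpe"
    by (rule infsum_reindex_bij_witness[of Ep iU jU0 Bpe U T0])
      (auto simp: iU_def jU0_def Ep_def Bpe_def iU0 elim!: evenE oddE | presburger)+
  moreover have "T0 summable_on Ep \<longleftrightarrow> U summable_on Bpe"
    by (rule summable_on_reindex_bij_witness[of Ep iU jU0 Bpe U T0])
      (auto simp: iU_def jU0_def Ep_def Bpe_def iU0 elim!: evenE oddE | presburger)+
  ultimately have R1: "infsum T0 Ep = infsum U Bpe" "T0 summable_on Ep \<longleftrightarrow> U summable_on Bpe" by auto
  have "infsum T1 Ep = infsum U Bpo"
    by (rule infsum_reindex_bij_witness[of Ep iU jU1 Bpo U T1])
      (auto simp: iU_def jU1_def Ep_def Bpo_def iU1 elim!: evenE oddE | presburger)+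
  moreover have "T1 summable_on Ep \<longleftrightarrow> U summable_on Bpo"
    by (rule summable_on_reindex_bij_witness[of Ep iU jU1 Bpo U T1])
      (auto simp: iU_def jU1_def Ep_def Bpo_def iU1 elim!: evenE oddE | presburger)+
  ultimately have R2: "infsum T1 Ep = infsum U Bpo" "T1 summable_on Ep \<longleftrightarrow> U summable_on Bpo" by auto
  have "infsum T0 Em = infsum U Bme"
    by (rule infsum_reindex_bij_witness[of Em iU jU0 Bme U T0])
      (auto simp: iU_def jU0_def Em_def Bme_def iU0 elim!: evenE oddE | presburger)+
  moreover have "T0 summable_on Em \<longleftrightarrow> U summable_on Bme"
    by (rule summable_on_reindex_bij_witness[of Em iU jU0 Bme U T0])
      (auto simp: iU_def jU0_def Em_def Bme_def iU0 elim!: evenE oddE | presburger)+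
  ultimately have R3: "infsum T0 Em = infsum U Bme" "T0 summable_on Em \<longleftrightarrow> U summable_on Bme" by auto
  have "infsum T1 Em = infsum U Bmo"
    by (rule infsum_reindex_bij_witness[of Em iU jU1 Bmo U T1])
      (auto simp: iU_def jU1_def Em_def Bmo_def iU1 elim!: evenE oddE | presburger)+
  moreover have "T1 summable_on Em \<longleftrightarrow> U summable_on Bmo"
    by (rule summable_on_reindex_bij_witness[of Em iU jU1 Bmo U T1])
      (auto simp: iU_def jU1_def Em_def Bmo_def iU1 elim!: evenE oddE | presburger)+
  ultimately have R4: "infsum T1 Em = infsum U Bmo" "T1 summable_on Em \<longleftrightarrow> U summable_on Bmo" by auto
  have "infsum (\<lambda>p. - T0 p) N = infsum V Bpo"
    by (rule infsum_reindex_bij_witness[of N iV jV0 Bpo V "\<lambda>p. - T0 p"])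
      (auto simp: iV_def jV0_def N_def Bpo_def iV0 iV0' elim!: evenE oddE | presburger)+
  moreover have "(\<lambda>p. - T0 p) summable_on N \<longleftrightarrow> V summable_on Bpo"
    by (rule summable_on_reindex_bij_witness[of N iV jV0 Bpo V "\<lambda>p. - T0 p"])
      (auto simp: iV_def jV0_def N_def Bpo_def iV0 iV0' elim!: evenE oddE | presburger)+
  ultimately have R5: "infsum (\<lambda>p. - T0 p) N = infsum V Bpo" "(\<lambda>p. - T0 p) summable_on N \<longleftrightarrow> V summable_on Bpo" by auto
  have "infsum (\<lambda>p. - T1 p) N = infsum V Bpe"
    by (rule infsum_reindex_bij_witness[of N iV jV1 Bpe V "\<lambda>p. - T1 p"])
      (auto simp: iV_def jV1_def N_def Bpe_def iV1 iV1' elim!: evenE oddE | presburger)+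
  moreover have "(\<lambda>p. - T1 p) summable_on N \<longleftrightarrow> V summable_on Bpe"
    by (rule summable_on_reindex_bij_witness[of N iV jV1 Bpe V "\<lambda>p. - T1 p"])
      (auto simp: iV_def jV1_def N_def Bpe_def iV1 iV1' elim!: evenE oddE | presburger)+
  ultimately have R6: "infsum (\<lambda>p. - T1 p) N = infsum V Bpe" "(\<lambda>p. - T1 p) summable_on N \<longleftrightarrow> V summable_on Bpe" by auto
  have "infsum (\<lambda>p. - T0 p) P = infsum V Bmo"
    by (rule infsum_reindex_bij_witness[of P iV jV0 Bmo V "\<lambda>p. - T0 p"])
      (auto simp: iV_def jV0_def P_def Bmo_def iV0 iV0' elim!: evenE oddE | presburger)+
  moreover have "(\<lambda>p. - T0 p) summable_on P \<longleftrightarrow> V summable_on Bmo"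
    by (rule summable_on_reindex_bij_witness[of P iV jV0 Bmo V "\<lambda>p. - T0 p"])
      (auto simp: iV_def jV0_def P_def Bmo_def iV0 iV0' elim!: evenE oddE | presburger)+
  ultimately have R7: "infsum (\<lambda>p. - T0 p) P = infsum V Bmo" "(\<lambda>p. - T0 p) summable_on P \<longleftrightarrow> V summable_on Bmo" by auto
  have "infsum (\<lambda>p. - T1 p) P = infsum V Bme"
    by (rule infsum_reindex_bij_witness[of P iV jV1 Bme V "\<lambda>p. - T1 p"])
      (auto simp: iV_def jV1_def P_def Bme_def iV1 iV1' elim!: evenE oddE | presburger)+
  moreover have "(\<lambda>p. - T1 p) summable_on P \<longleftrightarrow> V summable_on Bme"
    by (rule summable_on_reindex_bij_witness[of P iV jV1 Bme V "\<lambda>p. - T1 p"])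
      (auto simp: iV_def jV1_def P_def Bme_def iV1 iV1' elim!: evenE oddE | presburger)+
  ultimately have R8: "infsum (\<lambda>p. - T1 p) P = infsum V Bme" "(\<lambda>p. - T1 p) summable_on P \<longleftrightarrow> V summable_on Bme" by auto
  have SU: "U summable_on Bpe" "U summable_on Bpo" "U summable_on Bme" "U summable_on Bmo"
    using R1(2) R2(2) R3(2) R4(2) S0 S1 by auto
  have SV: "V summable_on Bpo" "V summable_on Bpe" "V summable_on Bmo" "V summable_on Bme"
    using R5(2) R6(2) R7(2) R8(2) S0 S1 summable_on_uminus by auto
  have f1: "hecke_f 1 (2 * K + 1) 1 (qpow \<tau> (of_int d)) (qpow \<tau> (of_int e)) \<tau> = infsum T0 Ap - infsum T0 Am"
    unfolding hecke_f_def T0_def Ap_def Am_def ..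
  have f2: "hecke_f 1 (2 * K + 1) 1 (qpow \<tau> (of_int (1 + K + d))) (qpow \<tau> (of_int (1 + K + e))) \<tau> = infsum T1' Ap - infsum T1' Am"
    unfolding hecke_f_def T1'_def Ap_def Am_def ..
  have f3: "hecke_f (K + 1) (K + 1) 1 (- \<epsilon> * qpow \<tau> (of_int (K + d + e) / 2)) (qpow \<tau> (of_int d)) \<tau> = infsum U Ap - infsum U Am"
    unfolding hecke_f_def U_def Ap_def Am_def ..
  have f4: "hecke_f (K + 1) (K + 1) 1 (- \<epsilon> * qpow \<tau> (2 + of_int (3 * K - d - e) / 2)) (qpow \<tau> (of_int (K + 2 - e))) \<tau> = infsum V' Ap - infsum V' Am"
    unfolding hecke_f_def V'_def Ap_def Am_def ..
  have g2: "c1 * (infsum T1' Ap - infsum T1' Am) = infsum T1 Ap - infsum T1 Am"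
    unfolding T1_def by (simp add: infsum_cmult_right' right_diff_distrib)
  have g4: "c2 * (infsum V' Ap - infsum V' Am) = infsum V Ap - infsum V Am"
    unfolding V_def by (simp add: infsum_cmult_right' right_diff_distrib)
  have a1: "infsum T0 Ap = infsum T0 Ep + infsum T0 P" unfolding Ap_split(1) by (rule infsum_Un_disjoint[OF S0(1,2) Ap_split(2)])
  have a2: "infsum T0 Am = infsum T0 Em + infsum T0 N" unfolding Am_split(1) by (rule infsum_Un_disjoint[OF S0(3,4) Am_split(2)])
  have a3: "infsum T1 Ap = infsum T1 Ep + infsum T1 P" unfolding Ap_split(1) by (rule infsum_Un_disjoint[OF S1(1,2) Ap_split(2)])
  have a4: "infsum T1 Am = infsum T1 Em + infsum T1 N" unfolding Am_split(1) by (rule infsum_Un_disjoint[OF S1(3,4) Am_split(2)])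
  have b1: "infsum U Ap = infsum U Bpe + infsum U Bpo" unfolding Bp_split(1) by (rule infsum_Un_disjoint[OF SU(1,2) Bp_split(2)])
  have b2: "infsum U Am = infsum U Bme + infsum U Bmo" unfolding Bm_split(1) by (rule infsum_Un_disjoint[OF SU(3,4) Bm_split(2)])
  have b3: "infsum V Ap = infsum V Bpe + infsum V Bpo" unfolding Bp_split(1) by (rule infsum_Un_disjoint[OF SV(2,1) Bp_split(2)])
  have b4: "infsum V Am = infsum V Bme + infsum V Bmo" unfolding Bm_split(1) by (rule infsum_Un_disjoint[OF SV(4,3) Bm_split(2)])
  have neg: "infsum (\<lambda>p. - T0 p) A = - infsum T0 A" "infsum (\<lambda>p. - T1 p) A = - infsum T1 A" for A
    by (rule infsum_uminus)+
  have c2': "\<epsilon> * qpow \<tau> (of_int (K + 2 - d - e) / 2) = - c2" unfolding c2_def by simp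
  have R5': "infsum V Bpo = - infsum T0 N" using R5(1) neg(1) by simp
  have R6': "infsum V Bpe = - infsum T1 N" using R6(1) neg(2) by simp
  have R7': "infsum V Bmo = - infsum T0 P" using R7(1) neg(1) by simp
  have R8': "infsum V Bme = - infsum T1 P" using R8(1) neg(2) by simp
  have L: "hecke_f 1 (2 * K + 1) 1 (qpow \<tau> (of_int d)) (qpow \<tau> (of_int e)) \<tau>
         + \<epsilon> * qpow \<tau> (of_int (K + d + e) / 2)
             * hecke_f 1 (2 * K + 1) 1 (qpow \<tau> (of_int (1 + K + d))) (qpow \<tau> (of_int (1 + K + e))) \<tau>
     = (infsum T0 Ep + infsum T0 P - (infsum T0 Em + infsum T0 N)) + (infsum T1 Ep + infsum T1 P - (infsum T1 Em + infsum T1 N))"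
    unfolding f1 f2 c1_def[symmetric] g2 a1 a2 a3 a4 ..
  have R: "hecke_f (K + 1) (K + 1) 1 (- \<epsilon> * qpow \<tau> (of_int (K + d + e) / 2)) (qpow \<tau> (of_int d)) \<tau>
         - \<epsilon> * qpow \<tau> (of_int (K + 2 - d - e) / 2)
             * hecke_f (K + 1) (K + 1) 1 (- \<epsilon> * qpow \<tau> (2 + of_int (3 * K - d - e) / 2))
                 (qpow \<tau> (of_int (K + 2 - e))) \<tau>
     = (infsum U Ap - infsum U Am) + c2 * (infsum V' Ap - infsum V' Am)"
    unfolding f3 f4 c2' by simp
  also have "\<dots> = (infsum T0 Ep + infsum T1 Ep - (infsum T0 Em + infsum T1 Em))
      + (- infsum T1 N + - infsum T0 N - (- infsum T1 P + - infsum T0 P))"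
    unfolding g4 b1 b2 b3 b4 R1(1)[symmetric] R2(1)[symmetric] R3(1)[symmetric] R4(1)[symmetric] R5' R6' R7' R8' ..
  finally show ?thesis unfolding L by (simp add: algebra_simps)
qed


end
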